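(* Let $X$ be a topological space, $\sigma$ a winning strategy for Player I in the open-open game on $X$, and $\mathcal P$ a family of non-empty open subsets of $X$ closed under $\sigma$. Then for every non-empty open set $V\subseteq X$ there exists $W\in\mathcal P$ such that every $U\in\mathcal P$ with $U\subseteq W$ satisfies $U\cap V\neq\emptyset$.
   Context: Open-open game on $X$: at inning $n$ Player I chooses a non-empty open $A_n\subseteq X$, then Player II chooses a non-empty open $B_n\subseteq A_n$; Player I wins if $\bigcup_nB_n$ is dense in $X$. A strategy for Player I is a function $\sigma$ assigning a non-empty open set to each finite (possibly empty) sequence of non-empty open sets; it is winning if Player I wins every play in which $A_0=\sigma(\emptyset)$ and $A_{n+1}=\sigma(B_0,\dots,B_n)$. $\mathcal P$ is closed under $\sigma$ if $\sigma(\emptyset)\in\mathcal P$ and $\sigma(B_0,\dots,B_n)\in\mathcal P$ whenever $B_0,\dots,B_n\in\mathcal P$. *)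

theory Defs
  imports "HOL-Analysis.Analysis"
begin

text \<open>The list
  [B0,...,Bn] is the history of Player II's moves.\<close>
definition oo_strategy :: "'a topology \<Rightarrow> ('a set list \<Rightarrow> 'a set) \<Rightarrow> bool" where
  "oo_strategy X \<sigma> \<longleftrightarrow>
     (\<forall>bs. (\<forall>b\<in>set bs. openin X b \<and> b \<noteq> {}) \<longrightarrow> openin X (\<sigma> bs) \<and> \<sigma> bs \<noteq> {})"

definition oo_winning_I :: "'a topology \<Rightarrow> ('a set list \<Rightarrow> 'a set) \<Rightarrow> bool" where
  "oo_winning_I X \<sigma> \<longleftrightarrow> oo_strategy X \<sigma> \<and>
     (\<forall>B :: nat \<Rightarrow> 'a set.
        (\<forall>n. openin X (B n) \<and> B n \<noteq> {} \<and> B n \<subseteq> \<sigma> (map B [0..<n]))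
        \<longrightarrow> X closure_of (\<Union>n. B n) = topspace X)"

definition closed_under_strategy :: "('a set list \<Rightarrow> 'a set) \<Rightarrow> 'a set set \<Rightarrow> bool" where
  "closed_under_strategy \<sigma> P \<longleftrightarrow>
     \<sigma> [] \<in> P \<and> (\<forall>bs. bs \<noteq> [] \<and> set bs \<subseteq> P \<longrightarrow> \<sigma> bs \<in> P)"

end

theory Submission
  imports Defs
begin

fun seqL :: "('b list \<Rightarrow> 'b) \<Rightarrow> nat \<Rightarrow> 'b list" where
  "seqL g 0 = []"
| "seqL g (Suc n) = seqL g n @ [g (seqL g n)]"

lemma seqL_map: "map (\<lambda>k. g (seqL g k)) [0..<n] = seqL g n"
  by (induction n) auto

theorem lemma6:
  fixes X :: "'a topology" and \<sigma> :: "'a set list \<Rightarrow> 'a set" and P :: "'a set set"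
  assumes "oo_winning_I X \<sigma>"
    and "\<forall>U\<in>P. openin X U \<and> U \<noteq> {}"
    and "closed_under_strategy \<sigma> P"
  shows "\<forall>V. openin X V \<and> V \<noteq> {} \<longrightarrow>
           (\<exists>W\<in>P. \<forall>U\<in>P. U \<subseteq> W \<longrightarrow> U \<inter> V \<noteq> {})"
proof (intro allI impI, rule ccontr)
  fix V assume V: "openin X V \<and> V \<noteq> {}"
    and nex: "\<not> (\<exists>W\<in>P. \<forall>U\<in>P. U \<subseteq> W \<longrightarrow> U \<inter> V \<noteq> {})"
  define f where "f W = (SOME U. U \<in> P \<and> U \<subseteq> W \<and> U \<inter> V = {})" for W
  have fP: "f W \<in> P \<and> f W \<subseteq> W \<and> f W \<inter> V = {}" if "W \<in> P" for W
    unfolding f_def by (rule someI_ex) (use nex that in blast)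
  define g where "g = f \<circ> \<sigma>"
  have sP: "\<sigma> l \<in> P" if "set l \<subseteq> P" for l
    using assms(3) that unfolding closed_under_strategy_def by (cases "l = []") auto
  have inv: "set (seqL g n) \<subseteq> P" for n
  proof (induction n)
    case (Suc n) then show ?case using fP[OF sP[OF Suc]] by (simp add: g_def)
  qed simp
  define B where "B n = g (seqL g n)" for n
  have mapB: "map B [0..<n] = seqL g n" for n
    unfolding B_def by (rule seqL_map)
  have Bp: "B n \<in> P \<and> B n \<subseteq> \<sigma> (map B [0..<n]) \<and> B n \<inter> V = {}" for n
    using fP[OF sP[OF inv[of n]]] by (simp add: B_def g_def mapB)
  have "\<forall>n. openin X (B n) \<and> B n \<noteq> {} \<and> B n \<subseteq> \<sigma> (map B [0..<n])"
    using Bp assms(2) by blast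
  then have dense: "X closure_of (\<Union>n. B n) = topspace X"
    using assms(1) unfolding oo_winning_I_def by blast
  have cl: "closedin X (topspace X - V)" using V by blast
  have sub: "(\<Union>n. B n) \<subseteq> topspace X - V"
    using Bp assms(2) openin_subset by blast
  have "X closure_of (\<Union>n. B n) \<subseteq> topspace X - V"
    using closure_of_minimal[OF sub cl] .
  with dense V openin_subset show False by blast
qed

end
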